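(* Let $S_1\subseteq S$ with $|S_1|>1$ and $a>0$, and let $q$ be an irreducible transition matrix on $S$ such that $\mathbf P_{s,q}\big(T^+_{\overline{S_1}\cup\{t\}}=T^+_{\{t\}}\big)\ge a$ for all $s,t\in S_1$. Then for every $y\in S_1$ there exists a $(a/L)^{|S|}$-maximal graph $\overline g\in G(S_1\setminus\{y\})$ such that every path of $\overline g$ leads to $y$.
   Context: $S$ is a finite set with $|S|\ge2$, $\overline C=S\setminus C$. $(\mathbf s_n)_{n\ge0}$ is a Markov chain with transition matrix $q$, $\mathbf P_{s,q}$ its law from $\mathbf s_0=s$, and $T^+_D=\min\{n\ge1:\mathbf s_n\in D\}$ ($\min\emptyset=+\infty$). For $C\subseteq S$, a $C$-graph is a directed graph on vertex set $S$ without cycles such that each $s\in C$ has exactly one outgoing edge $(s,g(s))$ and no state outside $C$ has an outgoing edge; from $s\in C$, following the edges one reaches a unique state of $\overline C$, to which $s$ is said to lead. $G(C)$ is the set of $C$-graphs, $p(g)=\prod_{s\in C}q(g(s)\mid s)$, and for $\eta>0$, $g$ is $\eta$-maximal if $p(g)\ge\eta\max_{g'\in G(C)}p(g')$. $L=\sum_{n=1}^{|S|-1}\binom{|S|}{n}n^{|S|}$. *)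

theory Defs
  imports Complex_Main
begin

text \<open>State space: the finite type 'a (S = UNIV). A transition matrix is
  q :: 'a => 'a => real with q x y = q(y | x).\<close>

definition stochastic :: "('a::finite \<Rightarrow> 'a \<Rightarrow> real) \<Rightarrow> bool" where
  "stochastic q \<longleftrightarrow> (\<forall>x y. 0 \<le> q x y) \<and> (\<forall>x. (\<Sum>y\<in>UNIV. q x y) = 1)"

definition irreducible :: "('a::finite \<Rightarrow> 'a \<Rightarrow> real) \<Rightarrow> bool" where
  "irreducible q \<longleftrightarrow> (\<forall>s t. (s, t) \<in> {(x, y). q x y > 0}\<^sup>+)"

fun path_prob :: "('a \<Rightarrow> 'a \<Rightarrow> real) \<Rightarrow> 'a \<Rightarrow> 'a list \<Rightarrow> real" where
  "path_prob q s [] = 1"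
| "path_prob q s (x # xs) = q s x * path_prob q x xs"

definition avoid_prob :: "('a::finite \<Rightarrow> 'a \<Rightarrow> real) \<Rightarrow> 'a \<Rightarrow> 'a set \<Rightarrow> nat \<Rightarrow> real" where
  "avoid_prob q s D n = (\<Sum>xs\<in>{xs. set xs \<subseteq> - D \<and> length xs = n}. path_prob q s xs)"

text \<open>P_{s,q}(T^+_D = n+1 and s_{n+1} = t)\<close>
definition first_hit_at :: "('a::finite \<Rightarrow> 'a \<Rightarrow> real) \<Rightarrow> 'a \<Rightarrow> 'a set \<Rightarrow> 'a \<Rightarrow> nat \<Rightarrow> real" where
  "first_hit_at q s D t n = (\<Sum>xs\<in>{xs. set xs \<subseteq> - D \<and> length xs = n}. path_prob q s (xs @ [t]))"

text \<open>For t in D: P_{s,q}(T^+_D = T^+_{t}) =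
  sum_n P(T^+_D = n, s_n = t) + P(T^+_D = infinity).\<close>
definition hit_prob :: "('a::finite \<Rightarrow> 'a \<Rightarrow> real) \<Rightarrow> 'a \<Rightarrow> 'a set \<Rightarrow> 'a \<Rightarrow> real" where
  "hit_prob q s D t = (\<Sum>n. first_hit_at q s D t n) + lim (\<lambda>n. avoid_prob q s D n)"

definition cgraphs :: "'a set \<Rightarrow> ('a \<times> 'a) set set" where
  "cgraphs C = {E. E \<subseteq> C \<times> UNIV \<and> (\<forall>s\<in>C. \<exists>!t. (s, t) \<in> E) \<and> acyclic E}"

definition graph_weight :: "('a \<Rightarrow> 'a \<Rightarrow> real) \<Rightarrow> ('a \<times> 'a) set \<Rightarrow> real" where
  "graph_weight q E = (\<Prod>(s, t)\<in>E. q s t)"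

definition eta_maximal ::
  "('a::finite \<Rightarrow> 'a \<Rightarrow> real) \<Rightarrow> 'a set \<Rightarrow> real \<Rightarrow> ('a \<times> 'a) set \<Rightarrow> bool" where
  "eta_maximal q C \<eta> E \<longleftrightarrow> E \<in> cgraphs C \<and>
     graph_weight q E \<ge> \<eta> * Max (graph_weight q ` cgraphs C)"

definition leads_to :: "('a \<times> 'a) set \<Rightarrow> 'a set \<Rightarrow> 'a \<Rightarrow> 'a \<Rightarrow> bool" where
  "leads_to E C s x \<longleftrightarrow> x \<notin> C \<and> (s, x) \<in> E\<^sup>*"

definition L_const :: "nat \<Rightarrow> real" where
  "L_const N = (\<Sum>n=1..N-1. real (N choose n) * real n ^ N)"

end

theory Submission
  imports Defs "HOL-Library.FuncSet"
begin

definition Lset :: "'a set \<Rightarrow> nat \<Rightarrow> 'a list set" where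
  "Lset A n = {xs. set xs \<subseteq> A \<and> length xs = n}"

lemma Lset_Suc: "Lset A (Suc n) = (\<lambda>(x, xs). x # xs) ` (A \<times> Lset A n)"
  unfolding Lset_def by (auto simp: length_Suc_conv image_iff)

lemma finite_Lset: "finite (Lset (A::'a::finite set) n)"
  unfolding Lset_def by (rule finite_lists_length_eq) simp

lemma pp_sum_Suc:
  fixes q :: "'a::finite \<Rightarrow> 'a \<Rightarrow> real"
  shows "(\<Sum>xs\<in>Lset A (Suc n). path_prob q s (xs @ ys)) =
    (\<Sum>x\<in>A. q s x * (\<Sum>xs\<in>Lset A n. path_prob q x (xs @ ys)))"
proof -
  have inj: "inj_on (\<lambda>(x, xs). x # xs) (A \<times> Lset A n)" by (auto simp: inj_on_def)
  have "(\<Sum>xs\<in>Lset A (Suc n). path_prob q s (xs @ ys)) =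
     (\<Sum>p\<in>A \<times> Lset A n. path_prob q s ((\<lambda>(x, xs). x # xs) p @ ys))"
    unfolding Lset_Suc by (subst sum.reindex[OF inj]) (simp add: o_def)
  also have "\<dots> = (\<Sum>x\<in>A. \<Sum>xs\<in>Lset A n. q s x * path_prob q x (xs @ ys))"
    by (subst sum.cartesian_product) (auto intro!: sum.cong)
  also have "\<dots> = (\<Sum>x\<in>A. q s x * (\<Sum>xs\<in>Lset A n. path_prob q x (xs @ ys)))"
    by (simp add: sum_distrib_left)
  finally show ?thesis .
qed

lemma L0: "{xs. set xs \<subseteq> A \<and> length xs = 0} = {[]}" by auto

lemma avoid_0: "avoid_prob q s D 0 = 1"
  unfolding avoid_prob_def L0 by simp

lemma avoid_Suc: "avoid_prob q s D (Suc n) = (\<Sum>x\<in>-D. q s x * avoid_prob q x D n)"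
  using pp_sum_Suc[where A="-D" and n=n and q=q and s=s and ys="[]"] unfolding avoid_prob_def Lset_def by simp

lemma fh_0: "first_hit_at q s D t 0 = q s t"
  unfolding first_hit_at_def L0 by simp

lemma fh_Suc: "first_hit_at q s D t (Suc n) = (\<Sum>x\<in>-D. q s x * first_hit_at q x D t n)"
  using pp_sum_Suc[where A="-D" and n=n and q=q and s=s and ys="[t]"] unfolding first_hit_at_def Lset_def by simp


lemma stoch_nonneg: "stochastic q \<Longrightarrow> 0 \<le> q x y" unfolding stochastic_def by auto
lemma stoch_sum: "stochastic q \<Longrightarrow> (\<Sum>y\<in>UNIV. q x y) = 1" unfolding stochastic_def by auto

lemma stoch_sum_le: assumes "stochastic q" shows "(\<Sum>y\<in>A. q x y) \<le> 1"
proof -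
  have "(\<Sum>y\<in>A. q x y) \<le> (\<Sum>y\<in>UNIV. q x y)"
    by (rule sum_mono2) (auto simp: stoch_nonneg[OF assms])
  then show ?thesis using stoch_sum[OF assms] by simp
qed

lemma avoid_nonneg: assumes "stochastic q" shows "0 \<le> avoid_prob q s D n"
proof (induction n arbitrary: s)
  case 0 then show ?case by (simp add: avoid_0)
next
  case (Suc n) then show ?case
    by (simp add: avoid_Suc sum_nonneg stoch_nonneg[OF assms])
qed

lemma avoid_le1: assumes "stochastic q" shows "avoid_prob q s D n \<le> 1"
proof (induction n arbitrary: s)
  case 0 then show ?case by (simp add: avoid_0)
next
  case (Suc n)
  have "avoid_prob q s D (Suc n) \<le> (\<Sum>x\<in>-D. q s x)"
    unfolding avoid_Suc by (rule sum_mono) (use Suc stoch_nonneg[OF assms] in \<open>auto intro: mult_left_le\<close>)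
  also have "\<dots> \<le> 1" by (rule stoch_sum_le[OF assms])
  finally show ?case .
qed

lemma avoid_Suc_le: assumes "stochastic q" shows "avoid_prob q s D (Suc n) \<le> avoid_prob q s D n"
proof (induction n arbitrary: s)
  case 0 then show ?case using avoid_le1[OF assms, of s D 1] by (simp add: avoid_0)
next
  case (Suc n)
  show ?case unfolding avoid_Suc[of q s D "Suc n"] avoid_Suc[of q s D n]
    by (rule sum_mono) (use Suc stoch_nonneg[OF assms] in \<open>auto intro: mult_left_mono\<close>)
qed

lemma avoid_mono: assumes "stochastic q" "m \<le> n" shows "avoid_prob q s D n \<le> avoid_prob q s D m"
  using assms(2)
proof (induction n)
  case 0 then show ?case by simp
next
  case (Suc n) then show ?case using avoid_Suc_le[OF assms(1), of s D n] by (cases "m = Suc n") auto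
qed

lemma avoid_lt1_step:
  assumes st: "stochastic q" and qv: "q x v > 0" and alt: "avoid_prob q v D k < 1" and vD: "v \<notin> D"
  shows "avoid_prob q x D (Suc k) < 1"
proof -
  have "avoid_prob q x D (Suc k) < (\<Sum>z\<in>-D. q x z)"
    unfolding avoid_Suc
  proof (rule sum_strict_mono_ex1)
    show "\<forall>z\<in>-D. q x z * avoid_prob q z D k \<le> q x z"
      using avoid_le1[OF st] stoch_nonneg[OF st] by (auto intro: mult_left_le)
    show "\<exists>z\<in>-D. q x z * avoid_prob q z D k < q x z"
      using qv alt vD by (intro bexI[of _ v]) auto
  qed simp
  also have "\<dots> \<le> 1" by (rule stoch_sum_le[OF st])
  finally show ?thesis .
qed

lemma avoid_lt1_base:
  assumes st: "stochastic q" and qv: "q x v > 0" and vD: "v \<in> D"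
  shows "avoid_prob q x D (Suc 0) < 1"
proof -
  have "avoid_prob q x D (Suc 0) = (\<Sum>z\<in>-D. q x z)" by (simp add: avoid_Suc avoid_0)
  also have "\<dots> < (\<Sum>z\<in>-D. q x z) + q x v" using qv by simp
  also have "\<dots> = (\<Sum>z\<in>insert v (-D). q x z)" using vD by simp
  also have "\<dots> \<le> 1" by (rule stoch_sum_le[OF st])
  finally show ?thesis .
qed

lemma avoid_exists_lt1:
  assumes st: "stochastic q" and irr: "irreducible q" and dD: "d \<in> D"
  shows "\<exists>k. avoid_prob q x D k < 1"
proof -
  have "(x, d) \<in> {(x, y). q x y > 0}\<^sup>+" using irr unfolding irreducible_def by auto
  then show ?thesis
  proof (induction rule: converse_trancl_induct)
    case (base x)
    then show ?case using avoid_lt1_base[OF st _ dD] by auto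
  next
    case (step x v)
    then obtain k where k: "avoid_prob q v D k < 1" by auto
    show ?case
    proof (cases "v \<in> D")
      case True then show ?thesis using avoid_lt1_base[OF st _ True] step by auto
    next
      case False then show ?thesis using avoid_lt1_step[OF st _ k False] step by auto
    qed
  qed
qed

lemma avoid_mult:
  assumes st: "stochastic q"
  shows "avoid_prob q s D (m + n) \<le> avoid_prob q s D m * Max (range (\<lambda>x. avoid_prob q x D n))"
proof (induction m arbitrary: s)
  case 0 then show ?case by (simp add: avoid_0)
next
  case (Suc m)
  have "avoid_prob q s D (Suc m + n) = (\<Sum>x\<in>-D. q s x * avoid_prob q x D (m + n))"
    by (simp add: avoid_Suc)
  also have "\<dots> \<le> (\<Sum>x\<in>-D. q s x * (avoid_prob q x D m * Max (range (\<lambda>x. avoid_prob q x D n))))"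
    by (rule sum_mono) (use Suc stoch_nonneg[OF st] in \<open>auto intro: mult_left_mono\<close>)
  also have "\<dots> = avoid_prob q s D (Suc m) * Max (range (\<lambda>x. avoid_prob q x D n))"
    by (simp add: avoid_Suc sum_distrib_right mult.assoc)
  finally show ?case .
qed

lemma avoid_tendsto0:
  assumes st: "stochastic q" and irr: "irreducible q" and dD: "d \<in> D"
  shows "(\<lambda>n. avoid_prob q s D n) \<longlonglongrightarrow> 0"
proof -
  have "\<forall>x. \<exists>k. avoid_prob q x D k < 1" using avoid_exists_lt1[OF st irr dD] by blast
  then obtain kf where kf: "\<And>x. avoid_prob q x D (kf x) < 1" by metis
  define K where "K = Max (range kf)"
  have K: "avoid_prob q x D K < 1" for x
    using avoid_mono[OF st, of "kf x" K x D] kf[of x] unfolding K_def by simp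
  define \<rho> where "\<rho> = Max (range (\<lambda>x. avoid_prob q x D K))"
  have \<rho>1: "\<rho> < 1" unfolding \<rho>_def using K by (simp)
  have \<rho>0: "0 \<le> \<rho>" unfolding \<rho>_def using avoid_nonneg[OF st, of s D K]
    by (meson Max_ge finite_UNIV finite_imageI order_trans rangeI)
  have pw: "\<forall>x. avoid_prob q x D (j * K) \<le> \<rho> ^ j" for j
  proof (induction j)
    case 0 then show ?case by (simp add: avoid_0)
  next
    case (Suc j)
    have M: "Max (range (\<lambda>x. avoid_prob q x D (j * K))) \<le> \<rho> ^ j" using Suc by simp
    show ?case
    proof
      fix x
      have "avoid_prob q x D (Suc j * K) = avoid_prob q x D (K + j * K)" by simp
      also have "\<dots> \<le> avoid_prob q x D K * Max (range (\<lambda>x. avoid_prob q x D (j * K)))"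
        by (rule avoid_mult[OF st])
      also have "\<dots> \<le> \<rho> * \<rho> ^ j"
      proof (rule mult_mono)
        show "avoid_prob q x D K \<le> \<rho>" unfolding \<rho>_def by simp
      qed (use M \<rho>0 avoid_nonneg[OF st, of x D "j*K"] in \<open>auto intro: order_trans[OF _ Max_ge]\<close>)
      finally show "avoid_prob q x D (Suc j * K) \<le> \<rho> ^ Suc j" by simp
    qed
  qed
  show ?thesis
  proof (rule LIMSEQ_I)
    fix r :: real assume r: "0 < r"
    obtain j where j: "\<rho> ^ j < r" using real_arch_pow_inv[OF r \<rho>1] by blast
    show "\<exists>no. \<forall>n\<ge>no. norm (avoid_prob q s D n - 0) < r"
    proof (intro exI allI impI)
      fix n assume "j * K \<le> n"
      then have "avoid_prob q s D n \<le> avoid_prob q s D (j * K)" by (rule avoid_mono[OF st])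
      then show "norm (avoid_prob q s D n - 0) < r"
        using pw j avoid_nonneg[OF st, of s D n] by (smt (verit) real_norm_def)
    qed
  qed
qed

lemma lim_avoid0:
  assumes st: "stochastic q" and irr: "irreducible q" and dD: "d \<in> D"
  shows "lim (\<lambda>n. avoid_prob q s D n) = 0"
  using avoid_tendsto0[OF assms] by (rule limI)


lemma fh_nonneg: assumes "stochastic q" shows "0 \<le> first_hit_at q s D t n"
proof (induction n arbitrary: s)
  case 0 then show ?case by (simp add: fh_0 stoch_nonneg[OF assms])
next
  case (Suc n) then show ?case
    by (simp add: fh_Suc sum_nonneg stoch_nonneg[OF assms])
qed

lemma fh_partial_bound:
  fixes \<phi> :: "'a::finite \<Rightarrow> real"
  assumes st: "stochastic q" and tD: "t \<in> D" and ph0: "\<And>x. 0 \<le> \<phi> x" and pht: "1 \<le> \<phi> t"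
    and sup: "\<And>x. x \<in> -D \<Longrightarrow> (\<Sum>z\<in>UNIV. q x z * \<phi> z) \<le> \<phi> x"
  shows "(\<Sum>k<n. first_hit_at q s D t k) \<le> (\<Sum>z\<in>UNIV. q s z * \<phi> z)"
proof (induction n arbitrary: s)
  case 0 then show ?case by (simp add: sum_nonneg ph0 stoch_nonneg[OF st])
next
  case (Suc n)
  have e1: "(\<Sum>k<Suc n. first_hit_at q s D t k) = q s t + (\<Sum>k<n. first_hit_at q s D t (Suc k))"
    by (subst sum.lessThan_Suc_shift) (simp add: fh_0)
  have e2: "(\<Sum>k<n. first_hit_at q s D t (Suc k)) = (\<Sum>x\<in>-D. q s x * (\<Sum>k<n. first_hit_at q x D t k))"
    by (simp add: fh_Suc sum_distrib_left sum.swap[of _ "{..<n}"])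
  have e3: "(\<Sum>x\<in>-D. q s x * (\<Sum>k<n. first_hit_at q x D t k)) \<le> (\<Sum>x\<in>-D. q s x * \<phi> x)"
  proof (rule sum_mono)
    fix x assume x: "x \<in> -D"
    have "(\<Sum>k<n. first_hit_at q x D t k) \<le> \<phi> x" using Suc[of x] sup[OF x] by linarith
    then show "q s x * (\<Sum>k<n. first_hit_at q x D t k) \<le> q s x * \<phi> x"
      by (rule mult_left_mono) (rule stoch_nonneg[OF st])
  qed
  have e4: "q s t \<le> q s t * \<phi> t"
    using stoch_nonneg[OF st, of s t] pht mult_left_mono[of 1 "\<phi> t" "q s t"] by simp
  have "(\<Sum>k<Suc n. first_hit_at q s D t k) \<le> q s t * \<phi> t + (\<Sum>x\<in>-D. q s x * \<phi> x)"
    using e1 e2 e3 e4 by linarith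
  also have "\<dots> \<le> (\<Sum>x\<in>D. q s x * \<phi> x) + (\<Sum>x\<in>-D. q s x * \<phi> x)"
    using member_le_sum[of t D "\<lambda>x. q s x * \<phi> x"] tD stoch_nonneg[OF st] ph0 by simp
  also have "\<dots> = (\<Sum>z\<in>UNIV. q s z * \<phi> z)"
    using sum.subset_diff[of D UNIV "\<lambda>x. q s x * \<phi> x"] by (simp add: Compl_eq_Diff_UNIV)
  finally show ?case .
qed

lemma hit_bound:
  fixes \<phi> :: "'a::finite \<Rightarrow> real"
  assumes st: "stochastic q" and irr: "irreducible q" and tD: "t \<in> D" and ph0: "\<And>x. 0 \<le> \<phi> x" and pht: "1 \<le> \<phi> t"
    and sup: "\<And>x. x \<in> -D \<Longrightarrow> (\<Sum>z\<in>UNIV. q x z * \<phi> z) \<le> \<phi> x"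
  shows "hit_prob q s D t \<le> (\<Sum>z\<in>UNIV. q s z * \<phi> z)"
proof -
  have pb: "\<And>n. (\<Sum>k<n. first_hit_at q s D t k) \<le> (\<Sum>z\<in>UNIV. q s z * \<phi> z)"
    by (rule fh_partial_bound[OF st tD ph0 pht sup])
  have "summable (\<lambda>n. first_hit_at q s D t n)"
    by (rule summableI_nonneg_bounded[OF fh_nonneg[OF st] pb])
  then have "(\<Sum>n. first_hit_at q s D t n) \<le> (\<Sum>z\<in>UNIV. q s z * \<phi> z)"
    by (rule suminf_le_const[OF _ pb])
  then show ?thesis unfolding hit_prob_def lim_avoid0[OF st irr tD] by simp
qed


lemma finite_cgraphs: "finite (cgraphs (C::'a::finite set))"
  by (rule finite_subset[of _ UNIV]) auto

lemma cg_sub: "E \<in> cgraphs C \<Longrightarrow> (u, v) \<in> E \<Longrightarrow> u \<in> C"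
  unfolding cgraphs_def by auto

lemma cg_ex1: "E \<in> cgraphs C \<Longrightarrow> u \<in> C \<Longrightarrow> \<exists>!v. (u, v) \<in> E"
  unfolding cgraphs_def by auto

lemma cg_acyclic: "E \<in> cgraphs C \<Longrightarrow> acyclic E"
  unfolding cgraphs_def by auto

lemma cg_sv: "E \<in> cgraphs C \<Longrightarrow> single_valued E"
  unfolding single_valued_def cgraphs_def by blast

lemma cgraphsI: "E \<subseteq> C \<times> UNIV \<Longrightarrow> (\<And>s. s \<in> C \<Longrightarrow> \<exists>!t. (s, t) \<in> E) \<Longrightarrow> acyclic E \<Longrightarrow> E \<in> cgraphs C"
  unfolding cgraphs_def by auto

lemma star_cg: assumes "y \<notin> C" shows "{(s, y) | s. s \<in> C} \<in> cgraphs C"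
proof (rule cgraphsI)
  show "acyclic {(s, y) | s. s \<in> C}"
    unfolding acyclic_def
  proof (intro allI notI)
    fix x assume "(x, x) \<in> {(s, y) | s. s \<in> C}\<^sup>+"
    then show False
    proof (cases rule: tranclE)
      case base then show ?thesis using assms by auto
    next
      case (step c)
      then have "x = y" by auto
      moreover have "x \<in> C" using step(1) by (cases rule: converse_tranclE) auto
      ultimately show ?thesis using assms by auto
    qed
  qed
qed auto

lemma star_reach: "s \<in> C \<Longrightarrow> (s, y) \<in> {(s, y) | s. s \<in> C}\<^sup>*" by auto

lemma gw_nonneg: "stochastic q \<Longrightarrow> 0 \<le> graph_weight q E"
  unfolding graph_weight_def by (rule prod_nonneg) (auto simp: stoch_nonneg)

lemma reach_unique:
  assumes sv: "single_valued R" and a: "a \<notin> Domain R" and b: "b \<notin> Domain R"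
    and va: "(v, a) \<in> R\<^sup>*" and vb: "(v, b) \<in> R\<^sup>*"
  shows "a = b"
proof -
  have "(a, b) \<in> R\<^sup>* \<or> (b, a) \<in> R\<^sup>*" by (rule single_valued_confluent[OF sv va vb])
  then show ?thesis using a b by (auto elim: converse_rtranclE)
qed

lemma reach_noC: "E \<in> cgraphs C \<Longrightarrow> u \<notin> C \<Longrightarrow> (u, v) \<in> E\<^sup>* \<Longrightarrow> v = u"
  by (auto elim: converse_rtranclE dest: cg_sub)


lemma alg_identity:
  fixes r :: "'a::finite \<Rightarrow> real" and T X :: "'a \<Rightarrow> bool"
  assumes disj: "\<And>v. \<not> (T v \<and> X v)" and one: "(\<Sum>z\<in>UNIV. r z) = 1"
  shows "(\<Sum>z\<in>UNIV. \<Sum>w\<in>UNIV. r z * r w * (if \<not> X w \<and> (T z \<or> (X z \<and> T w)) then 1 else 0))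
       = (\<Sum>w\<in>UNIV. r w * (if T w then 1 else 0))"
proof -
  have pt: "\<And>z w. r z * r w * (if \<not> X w \<and> (T z \<or> (X z \<and> T w)) then 1 else 0)
      = r z * r w * (if \<not> X w \<and> T z then 1 else 0) + r z * r w * (if X z \<and> T w then 1 else 0)"
    using disj by (auto simp: algebra_simps)
  have pt2: "\<And>z w. r z * r w * (if T w then 1 else 0)
      = r z * r w * (if \<not> X z \<and> T w then 1 else 0) + r z * r w * (if X z \<and> T w then 1 else 0)"
    by (auto simp: algebra_simps)
  have sw: "(\<Sum>z\<in>UNIV. \<Sum>w\<in>UNIV. r z * r w * (if \<not> X w \<and> T z then 1 else 0))
      = (\<Sum>z\<in>UNIV. \<Sum>w\<in>UNIV. r z * r w * (if \<not> X z \<and> T w then 1 else 0))"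
    by (subst sum.swap) (simp add: mult.commute)
  have "(\<Sum>w\<in>UNIV. r w * (if T w then 1 else 0)) = (\<Sum>z\<in>UNIV. r z) * (\<Sum>w\<in>UNIV. r w * (if T w then 1 else 0))"
    using one by simp
  also have "\<dots> = (\<Sum>z\<in>UNIV. \<Sum>w\<in>UNIV. r z * r w * (if T w then 1 else 0))"
    by (subst sum_product) (simp add: mult.assoc)
  finally have R: "(\<Sum>w\<in>UNIV. r w * (if T w then 1 else 0)) = (\<Sum>z\<in>UNIV. \<Sum>w\<in>UNIV. r z * r w * (if T w then 1 else 0))" .
  show ?thesis unfolding R pt pt2 sum.distrib sw ..
qed

context
  fixes C :: "'a::finite set" and x :: 'a
  assumes xC: "x \<in> C"
begin

lemma ins_cg:
  assumes g': "g' \<in> cgraphs (C - {x})" and wx: "(w, x) \<notin> g'\<^sup>*"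
  shows "insert (x, w) g' \<in> cgraphs C"
proof (rule cgraphsI)
  show "insert (x, w) g' \<subseteq> C \<times> UNIV" using g' xC unfolding cgraphs_def by auto
  show "acyclic (insert (x, w) g')" using wx cg_acyclic[OF g'] by simp
  fix s assume s: "s \<in> C"
  show "\<exists>!t. (s, t) \<in> insert (x, w) g'"
  proof (cases "s = x")
    case True then show ?thesis using cg_sub[OF g'] by auto
  next
    case False then show ?thesis using cg_ex1[OF g', of s] s by auto
  qed
qed

lemma ins_notin: "g' \<in> cgraphs (C - {x}) \<Longrightarrow> (x, w) \<notin> g'"
  using cg_sub by fastforce

lemma decomp:
  assumes g: "g \<in> cgraphs C"
  obtains g' w where "g' \<in> cgraphs (C - {x})" "(w, x) \<notin> g'\<^sup>*" "g = insert (x, w) g'"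
proof -
  obtain w where w: "(x, w) \<in> g" using cg_ex1[OF g xC] by auto
  define g' where "g' = g - {(x, w)}"
  have g'cg: "g' \<in> cgraphs (C - {x})"
  proof (rule cgraphsI)
    show "g' \<subseteq> (C - {x}) \<times> UNIV" using g w cg_ex1[OF g xC] unfolding g'_def cgraphs_def by auto
    show "acyclic g'" using cg_acyclic[OF g] unfolding g'_def by (rule acyclic_subset) auto
    fix s assume "s \<in> C - {x}" then show "\<exists>!t. (s, t) \<in> g'"
      using cg_ex1[OF g, of s] unfolding g'_def by auto
  qed
  have geq: "g = insert (x, w) g'" using w unfolding g'_def by auto
  have "(w, x) \<notin> g'\<^sup>*" using cg_acyclic[OF g] unfolding geq by simp
  then show ?thesis using that g'cg geq by blast
qed

lemma bij_ins:
  "bij_betw (\<lambda>(g', w). insert (x, w) g') (SIGMA g':cgraphs (C - {x}). {w. (w, x) \<notin> g'\<^sup>*}) (cgraphs C)"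
  unfolding bij_betw_def
proof
  show "inj_on (\<lambda>(g', w). insert (x, w) g') (SIGMA g':cgraphs (C - {x}). {w. (w, x) \<notin> g'\<^sup>*})"
  proof (rule inj_onI, clarify)
    fix g1 w1 g2 w2
    assume g1: "g1 \<in> cgraphs (C - {x})" and g2: "g2 \<in> cgraphs (C - {x})"
      and eq: "insert (x, w1) g1 = insert (x, w2) g2"
    have n1: "(x, w1) \<notin> g1" "(x, w2) \<notin> g1" using ins_notin[OF g1] by auto
    have n2: "(x, w1) \<notin> g2" "(x, w2) \<notin> g2" using ins_notin[OF g2] by auto
    have "w1 = w2" using eq n2 by blast
    moreover have "g1 = g2"
    proof -
      have "g1 = insert (x, w1) g1 - {(x, w1)}" using n1 by simp
      also have "\<dots> = insert (x, w2) g2 - {(x, w2)}" using eq \<open>w1 = w2\<close> by simp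
      also have "\<dots> = g2" using n2 by simp
      finally show ?thesis .
    qed
    ultimately show "g1 = g2 \<and> w1 = w2" by simp
  qed
  show "(\<lambda>(g', w). insert (x, w) g') ` (SIGMA g':cgraphs (C - {x}). {w. (w, x) \<notin> g'\<^sup>*}) = cgraphs C"
  proof
    show "(\<lambda>(g', w). insert (x, w) g') ` (SIGMA g':cgraphs (C - {x}). {w. (w, x) \<notin> g'\<^sup>*}) \<subseteq> cgraphs C"
      using ins_cg by auto
    show "cgraphs C \<subseteq> (\<lambda>(g', w). insert (x, w) g') ` (SIGMA g':cgraphs (C - {x}). {w. (w, x) \<notin> g'\<^sup>*})"
    proof
      fix g assume "g \<in> cgraphs C"
      then obtain g' w where "g' \<in> cgraphs (C - {x})" "(w, x) \<notin> g'\<^sup>*" "g = insert (x, w) g'"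
        by (rule decomp)
      then show "g \<in> (\<lambda>(g', w). insert (x, w) g') ` (SIGMA g':cgraphs (C - {x}). {w. (w, x) \<notin> g'\<^sup>*})"
        by (auto intro!: image_eqI[of _ _ "(g', w)"])
    qed
  qed
qed

lemma sum_cg:
  fixes F :: "('a \<times> 'a) set \<Rightarrow> real"
  shows "(\<Sum>g\<in>cgraphs C. F g) = (\<Sum>g'\<in>cgraphs (C - {x}). \<Sum>w\<in>UNIV.
            (if (w, x) \<notin> g'\<^sup>* then F (insert (x, w) g') else 0))"
proof -
  have "(\<Sum>g\<in>cgraphs C. F g) = (\<Sum>p\<in>(SIGMA g':cgraphs (C - {x}). {w. (w, x) \<notin> g'\<^sup>*}). F ((\<lambda>(g', w). insert (x, w) g') p))"
    by (rule sum.reindex_bij_betw[OF bij_ins, symmetric])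
  also have "\<dots> = (\<Sum>g'\<in>cgraphs (C - {x}). \<Sum>w\<in>{w. (w, x) \<notin> g'\<^sup>*}. F (insert (x, w) g'))"
    by (subst sum.Sigma) (auto simp: finite_cgraphs split_def)
  also have "\<dots> = (\<Sum>g'\<in>cgraphs (C - {x}). \<Sum>w\<in>UNIV.
            (if (w, x) \<notin> g'\<^sup>* then F (insert (x, w) g') else 0))"
    by (rule sum.cong[OF refl]) (simp add: sum.If_cases)
  finally show ?thesis .
qed

end


definition Nf :: "('a::finite \<Rightarrow> 'a \<Rightarrow> real) \<Rightarrow> 'a set \<Rightarrow> 'a \<Rightarrow> 'a \<Rightarrow> real" where
  "Nf q C y z = (\<Sum>g\<in>cgraphs C. graph_weight q g * (if (z, y) \<in> g\<^sup>* then 1 else 0))"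

lemma gw_insert: "(x, w) \<notin> g \<Longrightarrow> graph_weight q (insert (x, w) (g::('a::finite \<times> 'a) set)) = q x w * graph_weight q g"
  unfolding graph_weight_def by (simp add: prod.insert)

lemma Nf_decomp:
  assumes xC: "x \<in> C"
  shows "Nf q C y z = (\<Sum>g'\<in>cgraphs (C - {x}). graph_weight q g' * (\<Sum>w\<in>UNIV. q x w *
      (if \<not> (w, x) \<in> g'\<^sup>* \<and> ((z, y) \<in> g'\<^sup>* \<or> ((z, x) \<in> g'\<^sup>* \<and> (w, y) \<in> g'\<^sup>*)) then 1 else 0)))"
  unfolding Nf_def sum_cg[OF xC]
proof (rule sum.cong[OF refl])
  fix g' assume g': "g' \<in> cgraphs (C - {x})"
  show "(\<Sum>w\<in>UNIV. if (w, x) \<notin> g'\<^sup>* then graph_weight q (insert (x, w) g') *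
            (if (z, y) \<in> (insert (x, w) g')\<^sup>* then 1 else 0) else 0) =
        graph_weight q g' * (\<Sum>w\<in>UNIV. q x w *
      (if \<not> (w, x) \<in> g'\<^sup>* \<and> ((z, y) \<in> g'\<^sup>* \<or> ((z, x) \<in> g'\<^sup>* \<and> (w, y) \<in> g'\<^sup>*)) then 1 else 0))"
    unfolding sum_distrib_left
    by (rule sum.cong[OF refl]) (simp add: gw_insert[OF ins_notin[OF xC g']] rtrancl_insert)
qed

lemma harmonic:
  assumes st: "stochastic q" and xC: "x \<in> C" and yC: "y \<notin> C"
  shows "(\<Sum>z\<in>UNIV. q x z * Nf q C y z) = Nf q C y x"
proof -
  have key: "(\<Sum>z\<in>UNIV. q x z * (\<Sum>w\<in>UNIV. q x w *
      (if \<not> (w, x) \<in> g'\<^sup>* \<and> ((z, y) \<in> g'\<^sup>* \<or> ((z, x) \<in> g'\<^sup>* \<and> (w, y) \<in> g'\<^sup>*)) then 1 else 0)))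
    = (\<Sum>w\<in>UNIV. q x w *
      (if \<not> (w, x) \<in> g'\<^sup>* \<and> ((x, y) \<in> g'\<^sup>* \<or> ((x, x) \<in> g'\<^sup>* \<and> (w, y) \<in> g'\<^sup>*)) then 1 else 0))"
    if g': "g' \<in> cgraphs (C - {x})" for g'
  proof -
    have xD: "x \<notin> Domain g'" using cg_sub[OF g'] by auto
    have yD: "y \<notin> Domain g'" using cg_sub[OF g'] yC by auto
    have disj: "\<not> ((v, y) \<in> g'\<^sup>* \<and> (v, x) \<in> g'\<^sup>*)" for v
      using reach_unique[OF cg_sv[OF g'] yD xD] xC yC by auto
    have nxy: "(x, y) \<notin> g'\<^sup>*" using reach_noC[OF g', of x y] xC yC by auto
    have "(\<Sum>z\<in>UNIV. q x z * (\<Sum>w\<in>UNIV. q x w *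
      (if \<not> (w, x) \<in> g'\<^sup>* \<and> ((z, y) \<in> g'\<^sup>* \<or> ((z, x) \<in> g'\<^sup>* \<and> (w, y) \<in> g'\<^sup>*)) then 1 else 0)))
      = (\<Sum>z\<in>UNIV. \<Sum>w\<in>UNIV. q x z * q x w *
      (if \<not> (w, x) \<in> g'\<^sup>* \<and> ((z, y) \<in> g'\<^sup>* \<or> ((z, x) \<in> g'\<^sup>* \<and> (w, y) \<in> g'\<^sup>*)) then 1 else 0))"
      by (simp add: sum_distrib_left mult.assoc)
    also have "\<dots> = (\<Sum>w\<in>UNIV. q x w * (if (w, y) \<in> g'\<^sup>* then 1 else 0))"
      by (rule alg_identity[where T="\<lambda>v. (v, y) \<in> g'\<^sup>*" and X="\<lambda>v. (v, x) \<in> g'\<^sup>*", OF disj stoch_sum[OF st]])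
    also have "\<dots> = (\<Sum>w\<in>UNIV. q x w *
      (if \<not> (w, x) \<in> g'\<^sup>* \<and> ((x, y) \<in> g'\<^sup>* \<or> ((x, x) \<in> g'\<^sup>* \<and> (w, y) \<in> g'\<^sup>*)) then 1 else 0))"
      using disj nxy by (intro sum.cong) auto
    finally show ?thesis .
  qed
  have "(\<Sum>z\<in>UNIV. q x z * Nf q C y z) = (\<Sum>g'\<in>cgraphs (C - {x}). graph_weight q g' *
     (\<Sum>z\<in>UNIV. q x z * (\<Sum>w\<in>UNIV. q x w *
      (if \<not> (w, x) \<in> g'\<^sup>* \<and> ((z, y) \<in> g'\<^sup>* \<or> ((z, x) \<in> g'\<^sup>* \<and> (w, y) \<in> g'\<^sup>*)) then 1 else 0))))"
  proof -
    define S where "S g' z = (\<Sum>w\<in>UNIV. q x w *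
      (if \<not> (w, x) \<in> g'\<^sup>* \<and> ((z, y) \<in> g'\<^sup>* \<or> ((z, x) \<in> g'\<^sup>* \<and> (w, y) \<in> g'\<^sup>*)) then 1 else 0))" for g' z
    have "(\<Sum>z\<in>UNIV. q x z * Nf q C y z) = (\<Sum>z\<in>UNIV. q x z * (\<Sum>g'\<in>cgraphs (C - {x}). graph_weight q g' * S g' z))"
      unfolding Nf_decomp[OF xC] S_def ..
    also have "\<dots> = (\<Sum>z\<in>UNIV. \<Sum>g'\<in>cgraphs (C - {x}). graph_weight q g' * (q x z * S g' z))"
      by (rule sum.cong[OF refl]) (simp add: sum_distrib_left mult.left_commute)
    also have "\<dots> = (\<Sum>g'\<in>cgraphs (C - {x}). \<Sum>z\<in>UNIV. graph_weight q g' * (q x z * S g' z))"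
      by (rule sum.swap)
    also have "\<dots> = (\<Sum>g'\<in>cgraphs (C - {x}). graph_weight q g' * (\<Sum>z\<in>UNIV. q x z * S g' z))"
      by (rule sum.cong[OF refl]) (simp add: sum_distrib_left)
    finally show ?thesis unfolding S_def .
  qed
  also have "\<dots> = Nf q C y x"
    unfolding Nf_decomp[OF xC, of q y x] by (rule sum.cong[OF refl]) (simp add: key)
  finally show ?thesis .
qed


lemma acyc_sep:
  assumes a1: "acyclic R1" and a2: "acyclic R2" and sep: "\<And>u v. (u, v) \<in> R1 \<Longrightarrow> v \<notin> Domain R2"
  shows "acyclic (R1 \<union> R2)"
proof -
  have claim: "(a, b) \<in> R2\<^sup>+ \<or> (\<exists>m. (a, m) \<in> R2\<^sup>* \<and> (m, b) \<in> R1\<^sup>+)"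
    if "(a, b) \<in> (R1 \<union> R2)\<^sup>+" for a b
    using that
  proof (induction rule: trancl_induct)
    case (base b) then show ?case by auto
  next
    case (step b c)
    show ?case
    proof (cases "(b, c) \<in> R1")
      case True
      from step.IH show ?thesis
      proof
        assume "(a, b) \<in> R2\<^sup>+" then show ?thesis using True by (auto dest: trancl_into_rtrancl)
      next
        assume "\<exists>m. (a, m) \<in> R2\<^sup>* \<and> (m, b) \<in> R1\<^sup>+"
        then show ?thesis using True by (auto intro: trancl_into_trancl)
      qed
    next
      case False
      then have bc: "(b, c) \<in> R2" using step by auto
      from step.IH show ?thesis
      proof
        assume "(a, b) \<in> R2\<^sup>+" then show ?thesis using bc by (auto intro: trancl_into_trancl)
      next
        assume "\<exists>m. (a, m) \<in> R2\<^sup>* \<and> (m, b) \<in> R1\<^sup>+"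
        then obtain m where "(m, b) \<in> R1\<^sup>+" by auto
        then obtain u where "(u, b) \<in> R1" by (auto elim: tranclE)
        then have "b \<notin> Domain R2" by (rule sep)
        then show ?thesis using bc by auto
      qed
    qed
  qed
  show ?thesis unfolding acyclic_def
  proof (intro allI notI)
    fix a assume "(a, a) \<in> (R1 \<union> R2)\<^sup>+"
    from claim[OF this] show False
    proof
      assume "(a, a) \<in> R2\<^sup>+" then show False using a2 unfolding acyclic_def by auto
    next
      assume "\<exists>m. (a, m) \<in> R2\<^sup>* \<and> (m, a) \<in> R1\<^sup>+"
      then obtain m where am: "(a, m) \<in> R2\<^sup>*" and ma: "(m, a) \<in> R1\<^sup>+" by auto
      from ma obtain u where "(u, a) \<in> R1" by (auto elim: tranclE)
      then have aD: "a \<notin> Domain R2" by (rule sep)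
      have "a = m" using am aD by (auto elim: converse_rtranclE)
      then show False using ma a1 unfolding acyclic_def by auto
    qed
  qed
qed

lemma gw_split:
  "graph_weight q (E::('a::finite \<times> 'a) set) =
     graph_weight q {e\<in>E. fst e \<in> B} * graph_weight q {e\<in>E. fst e \<notin> B}"
proof -
  have "E = {e\<in>E. fst e \<in> B} \<union> {e\<in>E. fst e \<notin> B}" by auto
  then have "graph_weight q E = graph_weight q ({e\<in>E. fst e \<in> B} \<union> {e\<in>E. fst e \<notin> B})" by simp
  also have "\<dots> = graph_weight q {e\<in>E. fst e \<in> B} * graph_weight q {e\<in>E. fst e \<notin> B}"
    unfolding graph_weight_def by (rule prod.union_disjoint) auto
  finally show ?thesis .
qed

lemma gw_union:
  "(\<And>e. e \<in> A1 \<Longrightarrow> fst e \<in> B) \<Longrightarrow> (\<And>e. e \<in> A2 \<Longrightarrow> fst e \<notin> B) \<Longrightarrow>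
   graph_weight q (A1 \<union> (A2::('a::finite \<times> 'a) set)) = graph_weight q A1 * graph_weight q A2"
  unfolding graph_weight_def by (rule prod.union_disjoint) auto

context
  fixes C :: "'a::finite set" and y :: 'a and h g :: "('a \<times> 'a) set"
  assumes yC: "y \<notin> C" and h: "h \<in> cgraphs C" and g: "g \<in> cgraphs C"
begin

definition "BB = {u. (u, y) \<in> h\<^sup>*}"
definition "hn = {e\<in>h. fst e \<in> BB} \<union> {e\<in>g. fst e \<notin> BB}"
definition "h2 = {e\<in>g. fst e \<in> BB} \<union> {e\<in>h. fst e \<notin> BB}"

lemma hB: "(u, v) \<in> h \<Longrightarrow> u \<in> BB \<Longrightarrow> v \<in> BB"
proof -
  assume uv: "(u, v) \<in> h" and "u \<in> BB"
  then have uy: "(u, y) \<in> h\<^sup>*" unfolding BB_def by auto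
  have "u \<in> C" using cg_sub[OF h uv] .
  from uy show "v \<in> BB"
  proof (cases rule: converse_rtranclE)
    case base then show ?thesis using \<open>u \<in> C\<close> yC by auto
  next
    case (step v')
    then have "v' = v" using cg_sv[OF h] uv unfolding single_valued_def by blast
    then show ?thesis using step unfolding BB_def by auto
  qed
qed

lemma hnB: "(u, v) \<in> h \<Longrightarrow> u \<notin> BB \<Longrightarrow> v \<notin> BB"
  unfolding BB_def by (auto intro: converse_rtrancl_into_rtrancl)

lemma hn_cg: "hn \<in> cgraphs C"
proof (rule cgraphsI)
  show "hn \<subseteq> C \<times> UNIV" unfolding hn_def using h g unfolding cgraphs_def by auto
  show "acyclic hn" unfolding hn_def
  proof (rule acyc_sep)
    show "acyclic {e \<in> h. fst e \<in> BB}" by (rule acyclic_subset[OF cg_acyclic[OF h]]) auto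
    show "acyclic {e \<in> g. fst e \<notin> BB}" by (rule acyclic_subset[OF cg_acyclic[OF g]]) auto
    fix u v assume "(u, v) \<in> {e \<in> h. fst e \<in> BB}"
    then show "v \<notin> Domain {e \<in> g. fst e \<notin> BB}" using hB by auto
  qed
  fix s assume s: "s \<in> C"
  show "\<exists>!t. (s, t) \<in> hn"
    using cg_ex1[OF h s] cg_ex1[OF g s] unfolding hn_def by (cases "s \<in> BB") auto
qed

lemma h2_cg: "h2 \<in> cgraphs C"
proof (rule cgraphsI)
  show "h2 \<subseteq> C \<times> UNIV" unfolding h2_def using h g unfolding cgraphs_def by auto
  have "acyclic ({e \<in> h. fst e \<notin> BB} \<union> {e\<in>g. fst e \<in> BB})"
  proof (rule acyc_sep)
    show "acyclic {e \<in> h. fst e \<notin> BB}" by (rule acyclic_subset[OF cg_acyclic[OF h]]) auto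
    show "acyclic {e \<in> g. fst e \<in> BB}" by (rule acyclic_subset[OF cg_acyclic[OF g]]) auto
    fix u v assume "(u, v) \<in> {e \<in> h. fst e \<notin> BB}"
    then show "v \<notin> Domain {e \<in> g. fst e \<in> BB}" using hnB by auto
  qed
  then show "acyclic h2" unfolding h2_def by (simp add: Un_commute)
  fix s assume s: "s \<in> C"
  show "\<exists>!t. (s, t) \<in> h2"
    using cg_ex1[OF h s] cg_ex1[OF g s] unfolding h2_def by (cases "s \<in> BB") auto
qed

lemma gw_swap: "graph_weight q hn * graph_weight q h2 = graph_weight q h * graph_weight q g"
proof -
  have "graph_weight q hn = graph_weight q {e\<in>h. fst e \<in> BB} * graph_weight q {e\<in>g. fst e \<notin> BB}"
    unfolding hn_def by (rule gw_union) auto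
  moreover have "graph_weight q h2 = graph_weight q {e\<in>g. fst e \<in> BB} * graph_weight q {e\<in>h. fst e \<notin> BB}"
    unfolding h2_def by (rule gw_union) auto
  ultimately show ?thesis using gw_split[of q h BB] gw_split[of q g BB] by (simp add: algebra_simps)
qed

lemma hn_reach_h: "(u, y) \<in> h\<^sup>* \<Longrightarrow> (u, y) \<in> hn\<^sup>*"
proof (induction rule: converse_rtrancl_induct)
  case base then show ?case by simp
next
  case (step u v)
  then have "u \<in> BB" unfolding BB_def by (auto intro: converse_rtrancl_into_rtrancl)
  then have "(u, v) \<in> hn" using step unfolding hn_def by auto
  then show ?case using step by (auto intro: converse_rtrancl_into_rtrancl)
qed

lemma hn_reach_g: "(u, y) \<in> g\<^sup>* \<Longrightarrow> (u, y) \<in> hn\<^sup>*"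
proof (induction rule: converse_rtrancl_induct)
  case base then show ?case by simp
next
  case (step u v)
  show ?case
  proof (cases "u \<in> BB")
    case True then show ?thesis using hn_reach_h unfolding BB_def by auto
  next
    case False
    then have "(u, v) \<in> hn" using step unfolding hn_def by auto
    then show ?thesis using step by (auto intro: converse_rtrancl_into_rtrancl)
  qed
qed

end


lemma gw_le_Max: "E \<in> cgraphs (C::'a::finite set) \<Longrightarrow> graph_weight q E \<le> Max (graph_weight q ` cgraphs C)"
  by (rule Max_ge) (auto simp: finite_cgraphs)

lemma combine:
  fixes C :: "'a::finite set" and q
  defines "M \<equiv> Max (graph_weight q ` cgraphs C)"
  assumes st: "stochastic q" and yC: "y \<notin> C" and Mpos: "0 < M" and c0: "0 < c"
    and hyp: "\<forall>s\<in>C. \<exists>g\<in>cgraphs C. (s, y) \<in> g\<^sup>* \<and> c * M \<le> graph_weight q g"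
  shows "h \<in> cgraphs C \<Longrightarrow> \<exists>E\<in>cgraphs C. (\<forall>s\<in>C. (s, y) \<in> E\<^sup>*) \<and>
            c ^ card {s\<in>C. (s, y) \<notin> h\<^sup>*} * graph_weight q h \<le> graph_weight q E"
proof (induction "card {s\<in>C. (s, y) \<notin> h\<^sup>*}" arbitrary: h rule: less_induct)
  case less
  note hcg = less.prems
  show ?case
  proof (cases "{s\<in>C. (s, y) \<notin> h\<^sup>*} = {}")
    case True
    then have cz: "card {s\<in>C. (s, y) \<notin> h\<^sup>*} = 0" by simp
    then have "c ^ card {s\<in>C. (s, y) \<notin> h\<^sup>*} * graph_weight q h = graph_weight q h" unfolding cz by simp
    then have e: "c ^ card {s\<in>C. (s, y) \<notin> h\<^sup>*} * graph_weight q h \<le> graph_weight q h" by linarith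
    have "\<forall>s\<in>C. (s, y) \<in> h\<^sup>*" using True by auto
    then show ?thesis using hcg e by blast
  next
    case False
    then obtain s where s: "s \<in> C" "(s, y) \<notin> h\<^sup>*" by auto
    then obtain g where g: "g \<in> cgraphs C" "(s, y) \<in> g\<^sup>*" "c * M \<le> graph_weight q g"
      using hyp by blast
    define h' where "h' = hn y h g"
    have h'cg: "h' \<in> cgraphs C" unfolding h'_def by (rule hn_cg[OF yC hcg g(1)])
    have sub: "{u\<in>C. (u, y) \<notin> h'\<^sup>*} \<subseteq> {u\<in>C. (u, y) \<notin> h\<^sup>*} - {s}"
      using hn_reach_h[OF yC hcg g(1)] hn_reach_g[OF yC hcg g(1) g(2)] unfolding h'_def by auto
    have lt: "card {u\<in>C. (u, y) \<notin> h'\<^sup>*} < card {s\<in>C. (s, y) \<notin> h\<^sup>*}"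
      by (rule le_less_trans[OF card_mono[OF _ sub]], simp, rule card_Diff1_less) (use s in auto)
    obtain E where E: "E \<in> cgraphs C" "\<forall>s\<in>C. (s, y) \<in> E\<^sup>*"
        "c ^ card {u\<in>C. (u, y) \<notin> h'\<^sup>*} * graph_weight q h' \<le> graph_weight q E"
      using less.hyps[OF lt h'cg] by blast
    have c1: "c \<le> 1"
    proof -
      have "c * M \<le> M" using g(3) gw_le_Max[OF g(1), of q] unfolding M_def by simp
      then show ?thesis using Mpos by simp
    qed
    have gh0: "0 \<le> graph_weight q h" by (rule gw_nonneg[OF st])
    have gh'0: "0 \<le> graph_weight q h'" by (rule gw_nonneg[OF st])
    have "graph_weight q h * (c * M) \<le> graph_weight q h * graph_weight q g"
      using g(3) gh0 by (rule mult_left_mono)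
    also have "\<dots> = graph_weight q h' * graph_weight q (h2 y h g)"
      unfolding h'_def by (rule gw_swap[OF yC hcg g(1), symmetric])
    also have "\<dots> \<le> graph_weight q h' * M"
      using gw_le_Max[OF h2_cg[OF yC hcg g(1)], of q] gh'0 unfolding M_def by (rule mult_left_mono)
    finally have "c * graph_weight q h \<le> graph_weight q h'" using Mpos by (simp add: algebra_simps)
    have "c ^ card {s\<in>C. (s, y) \<notin> h\<^sup>*} \<le> c ^ Suc (card {u\<in>C. (u, y) \<notin> h'\<^sup>*})"
      using lt c0 c1 by (intro power_decreasing) auto
    then have "c ^ card {s\<in>C. (s, y) \<notin> h\<^sup>*} * graph_weight q h \<le> c ^ card {u\<in>C. (u, y) \<notin> h'\<^sup>*} * (c * graph_weight q h)"
      using gh0 mult_right_mono[of "c ^ card {s\<in>C. (s, y) \<notin> h\<^sup>*}" "c * c ^ card {u\<in>C. (u, y) \<notin> h'\<^sup>*}" "graph_weight q h"]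
      by (simp add: mult_ac)
    also have "\<dots> \<le> c ^ card {u\<in>C. (u, y) \<notin> h'\<^sup>*} * graph_weight q h'"
      using \<open>c * graph_weight q h \<le> graph_weight q h'\<close> c0 by (simp add: mult_left_mono)
    also have "\<dots> \<le> graph_weight q E" by (rule E(3))
    finally show ?thesis using E by blast
  qed
qed


lemma card_cgraphs: "card (cgraphs (C::'a::finite set)) \<le> (card (UNIV::'a set) - 1) ^ card C"
proof -
  define f where "f E = (\<lambda>u. if u \<in> C then (THE v. (u, v) \<in> E) else undefined)" for E :: "('a \<times> 'a) set"
  have fE: "(u, f E u) \<in> E" if "E \<in> cgraphs C" "u \<in> C" for E u
    using cg_ex1[OF that] that(2) unfolding f_def by (auto intro: theI')
  have fE2: "f E u = v" if "E \<in> cgraphs C" "(u, v) \<in> E" for E u v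
    using cg_ex1[OF that(1) cg_sub[OF that]] that cg_sub[OF that] unfolding f_def by (auto intro: the1_equality)
  have "inj_on f (cgraphs C)"
  proof (rule inj_onI)
    fix E1 E2 assume E1: "E1 \<in> cgraphs C" and E2: "E2 \<in> cgraphs C" and eq: "f E1 = f E2"
    show "E1 = E2"
    proof (intro set_eqI iffI)
      fix e assume "e \<in> E1"
      then obtain u v where e: "e = (u, v)" "(u, v) \<in> E1" by (cases e) auto
      then have "f E2 u = v" using fE2[OF E1 e(2)] eq by simp
      then show "e \<in> E2" using fE[OF E2 cg_sub[OF E1 e(2)]] e by simp
    next
      fix e assume "e \<in> E2"
      then obtain u v where e: "e = (u, v)" "(u, v) \<in> E2" by (cases e) auto
      then have "f E1 u = v" using fE2[OF E2 e(2)] eq by simp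
      then show "e \<in> E1" using fE[OF E1 cg_sub[OF E2 e(2)]] e by simp
    qed
  qed
  moreover have "f ` cgraphs C \<subseteq> (\<Pi>\<^sub>E u\<in>C. UNIV - {u})"
  proof
    fix F assume "F \<in> f ` cgraphs C"
    then obtain E where E: "E \<in> cgraphs C" "F = f E" by auto
    have "f E u \<noteq> u" if "u \<in> C" for u
    proof
      assume "f E u = u"
      then have "(u, u) \<in> E" using fE[OF E(1) that] by simp
      then show False using cg_acyclic[OF E(1)] unfolding acyclic_def by auto
    qed
    then show "F \<in> (\<Pi>\<^sub>E u\<in>C. UNIV - {u})" using E unfolding f_def by auto
  qed
  ultimately have "card (cgraphs C) \<le> card (\<Pi>\<^sub>E u\<in>C. UNIV - {u})"
    by (intro card_inj_on_le) (auto simp: finite_PiE)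
  also have "\<dots> = (\<Prod>u\<in>C. card (UNIV - {u}))" by (rule card_PiE) simp
  also have "\<dots> = (card (UNIV::'a set) - 1) ^ card C" by simp
  finally show ?thesis .
qed

lemma L_bound:
  assumes N2: "2 \<le> N" and kN: "k \<le> N"
  shows "real (N - 1) ^ k \<le> L_const N"
proof -
  have "real (N - 1) ^ k \<le> real (N - 1) ^ N"
    using N2 kN by (intro power_increasing) auto
  also have "\<dots> \<le> real (N choose (N - 1)) * real (N - 1) ^ N"
  proof -
    have "N choose (N - 1) = N" using N2 by (subst binomial_symmetric) auto
    then show ?thesis using N2 by (simp add: mult_le_cancel_right1)
  qed
  also have "\<dots> \<le> L_const N" unfolding L_const_def
    by (rule member_le_sum[of "N - 1" "{1..N-1}" "\<lambda>n. real (N choose n) * real n ^ N"]) (use N2 in auto)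
  finally show ?thesis .
qed


lemma max_att:
  assumes "finite A" "a \<in> A" shows "\<exists>x\<in>A. f x = Max (f ` A)"
proof -
  have "Max (f ` A) \<in> f ` A" by (rule Max_in) (use assms in auto)
  then show ?thesis by auto
qed

lemma Nf_nonneg: "stochastic q \<Longrightarrow> 0 \<le> Nf q C y z"
  unfolding Nf_def by (rule sum_nonneg) (simp add: gw_nonneg)

lemma Nf_y: "Nf q C y y = (\<Sum>g\<in>cgraphs C. graph_weight q g)"
  unfolding Nf_def by simp

lemma key_hyp:
  fixes q :: "'a::finite \<Rightarrow> 'a \<Rightarrow> real" and S1 :: "'a set" and y :: 'a and a :: real
  defines "C \<equiv> S1 - {y}"
  defines "M \<equiv> Max (graph_weight q ` cgraphs C)"
  assumes st: "stochastic q" and irr: "irreducible q" and yS: "y \<in> S1" and Mpos: "0 < M"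
    and hp: "a \<le> hit_prob q s (- S1 \<union> {y}) y" and sC: "s \<in> C" and apos: "0 < a"
  shows "\<exists>g\<in>cgraphs C. (s, y) \<in> g\<^sup>* \<and> a / real (card (cgraphs C)) * M \<le> graph_weight q g"
proof -
  define D where "D = - S1 \<union> {y}"
  have yC: "y \<notin> C" unfolding C_def by auto
  have CD: "- D = C" unfolding D_def C_def by auto
  define Z where "Z = Nf q C y y"
  have fin: "finite (cgraphs C)" by (rule finite_cgraphs)
  have MZ: "M \<le> Z"
  proof -
    obtain h where h: "h \<in> cgraphs C" "graph_weight q h = M"
      using max_att[OF fin star_cg[OF yC], of "graph_weight q"] unfolding M_def by blast
    have "graph_weight q h \<le> (\<Sum>g\<in>cgraphs C. graph_weight q g)"
      by (rule member_le_sum) (use h fin gw_nonneg[OF st] in auto)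
    then show ?thesis using h unfolding Z_def Nf_y by simp
  qed
  have Zpos: "0 < Z" using Mpos MZ by simp
  define \<phi> where "\<phi> z = Nf q C y z / Z" for z
  have "hit_prob q s D y \<le> (\<Sum>z\<in>UNIV. q s z * \<phi> z)"
  proof (rule hit_bound[OF st irr])
    show "y \<in> D" unfolding D_def by simp
    show "0 \<le> \<phi> x" for x unfolding \<phi>_def using Nf_nonneg[OF st] Zpos by simp
    show "1 \<le> \<phi> y" unfolding \<phi>_def Z_def using Zpos Z_def by simp
    fix x assume "x \<in> - D"
    then have xC: "x \<in> C" using CD by simp
    have "(\<Sum>z\<in>UNIV. q x z * \<phi> z) = (\<Sum>z\<in>UNIV. q x z * Nf q C y z) / Z"
      unfolding \<phi>_def by (simp add: sum_divide_distrib)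
    also have "\<dots> = \<phi> x" unfolding \<phi>_def harmonic[OF st xC yC] ..
    finally show "(\<Sum>z\<in>UNIV. q x z * \<phi> z) \<le> \<phi> x" by simp
  qed
  also have "(\<Sum>z\<in>UNIV. q s z * \<phi> z) = \<phi> s"
    unfolding \<phi>_def by (simp add: sum_divide_distrib[symmetric] harmonic[OF st sC yC])
  finally have aphi: "a \<le> Nf q C y s / Z" using hp unfolding D_def \<phi>_def by simp
  define Gs where "Gs = {g\<in>cgraphs C. (s, y) \<in> g\<^sup>*}"
  have Gsne: "{(s, y) | s. s \<in> C} \<in> Gs" unfolding Gs_def using star_cg[OF yC] sC by auto
  have finGs: "finite Gs" unfolding Gs_def using fin by simp
  define Mx where "Mx = Max (graph_weight q ` Gs)"
  obtain gm where gm: "gm \<in> Gs" "graph_weight q gm = Mx"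
    using max_att[OF finGs Gsne, of "graph_weight q"] unfolding Mx_def by blast
  have Mx0: "0 \<le> Mx" using gm gw_nonneg[OF st] by metis
  have "Nf q C y s = (\<Sum>g\<in>Gs. graph_weight q g)"
    unfolding Nf_def Gs_def using fin by (simp add: sum.inter_filter if_distrib cong: if_cong)
  also have "\<dots> \<le> real (card Gs) * Mx"
    by (rule sum_bounded_above) (auto simp: Mx_def finGs)
  also have "\<dots> \<le> real (card (cgraphs C)) * Mx"
    by (rule mult_right_mono) (auto simp: Gs_def Mx0 intro: card_mono fin)
  finally have NfK: "Nf q C y s \<le> real (card (cgraphs C)) * Mx" .
  have Kpos: "0 < real (card (cgraphs C))"
    using fin star_cg[OF yC] card_gt_0_iff by fastforce
  have "a * M \<le> a * Z" using MZ apos by simp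
  also have "a * Z \<le> Nf q C y s" using aphi Zpos by (simp add: pos_le_divide_eq)
  also have "\<dots> \<le> real (card (cgraphs C)) * Mx" by (rule NfK)
  finally have "a / real (card (cgraphs C)) * M \<le> Mx" using Kpos by (simp add: field_simps)
  then show ?thesis using gm unfolding Gs_def by auto
qed


theorem lemma5:
  fixes q :: "'a::finite \<Rightarrow> 'a \<Rightarrow> real" and S1 :: "'a set" and a :: real
  assumes "card (UNIV::'a set) \<ge> 2"
    and "card S1 > 1"
    and "a > 0"
    and "stochastic q"
    and "irreducible q"
    and "\<forall>s\<in>S1. \<forall>t\<in>S1. hit_prob q s (- S1 \<union> {t}) t \<ge> a"
  shows "\<forall>y\<in>S1. \<exists>E\<in>cgraphs (S1 - {y}).
           eta_maximal q (S1 - {y}) ((a / L_const (card (UNIV::'a set))) ^ card (UNIV::'a set)) E \<and>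
           (\<forall>s\<in>S1 - {y}. leads_to E (S1 - {y}) s y)"
proof (intro ballI)
  fix y assume yS: "y \<in> S1"
  note N2 = assms(1) and st = assms(4) and irr = assms(5) and apos = assms(3)
  define N where "N = card (UNIV::'a set)"
  define C where "C = S1 - {y}"
  define M where "M = Max (graph_weight q ` cgraphs C)"
  define \<eta> where "\<eta> = (a / L_const N) ^ N"
  have yC: "y \<notin> C" unfolding C_def by simp
  have fin: "finite (cgraphs C)" by (rule finite_cgraphs)
  have star: "{(s, y) | s. s \<in> C} \<in> cgraphs C" by (rule star_cg[OF yC])
  have M0: "0 \<le> M" unfolding M_def
    using gw_le_Max[OF star, of q] gw_nonneg[OF st, of "{(s, y) | s. s \<in> C}"] by linarith
  have Lpos: "1 \<le> L_const N" using L_bound[of N 0] N2 unfolding N_def by simp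
  have eta0: "0 \<le> \<eta>" unfolding \<eta>_def using apos Lpos by simp
  have goal: "\<exists>E\<in>cgraphs C. \<eta> * M \<le> graph_weight q E \<and> (\<forall>s\<in>C. (s, y) \<in> E\<^sup>*)"
  proof (cases "M \<le> 0")
    case True
    then have "\<eta> * M \<le> 0" using eta0 by (simp add: mult_nonneg_nonpos)
    then show ?thesis using star gw_nonneg[OF st, of "{(s, y) | s. s \<in> C}"]
      by (intro bexI[OF _ star]) auto
  next
    case False
    then have Mpos: "0 < M" by simp
    define K where "K = real (card (cgraphs C))"
    define c where "c = a / K"
    have Kpos: "0 < K" unfolding K_def using fin star card_gt_0_iff by fastforce
    have c0: "0 < c" unfolding c_def using Kpos apos by simp
    have hyp: "\<forall>s\<in>C. \<exists>g\<in>cgraphs C. (s, y) \<in> g\<^sup>* \<and> c * M \<le> graph_weight q g"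
    proof
      fix s assume sC: "s \<in> C"
      have hp: "a \<le> hit_prob q s (- S1 \<union> {y}) y" using assms(6) sC yS unfolding C_def by auto
      show "\<exists>g\<in>cgraphs C. (s, y) \<in> g\<^sup>* \<and> c * M \<le> graph_weight q g"
        using key_hyp[OF st irr yS _ hp _ apos] Mpos sC unfolding c_def K_def M_def C_def by blast
    qed
    obtain h where h: "h \<in> cgraphs C" "graph_weight q h = M"
      using max_att[OF fin star, of "graph_weight q"] unfolding M_def by blast
    obtain E where E: "E \<in> cgraphs C" "\<forall>s\<in>C. (s, y) \<in> E\<^sup>*"
        "c ^ card {s\<in>C. (s, y) \<notin> h\<^sup>*} * graph_weight q h \<le> graph_weight q E"
      using combine[OF st yC Mpos[unfolded M_def] c0 hyp[unfolded M_def] h(1)] by blast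
    have c1: "c \<le> 1"
    proof -
      have "card C = card S1 - 1" unfolding C_def using yS by (simp add: card_Diff_singleton)
      then have "card C > 0" using assms(2) by simp
      then obtain s where "s \<in> C" by (metis card_gt_0_iff ex_in_conv)
      then obtain g where g: "g \<in> cgraphs C" "c * M \<le> graph_weight q g" using hyp by blast
      have "graph_weight q g \<le> M" unfolding M_def by (rule gw_le_Max[OF g(1)])
      then have "c * M \<le> M" using g(2) by linarith
      then show ?thesis using Mpos by simp
    qed
    have cardC: "card C \<le> N" unfolding N_def by (rule card_mono) auto
    have KL: "K \<le> L_const N"
    proof -
      have "K \<le> real ((N - 1) ^ card C)" unfolding K_def N_def using card_cgraphs[of C] by linarith
      also have "\<dots> = real (N - 1) ^ card C" by simp
      also have "\<dots> \<le> L_const N" by (rule L_bound[OF _ cardC]) (use N2 in \<open>simp add: N_def\<close>)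
      finally show ?thesis .
    qed
    have bad: "card {s\<in>C. (s, y) \<notin> h\<^sup>*} \<le> N"
      using cardC card_mono[of C "{s\<in>C. (s, y) \<notin> h\<^sup>*}"] by auto
    have "\<eta> \<le> c ^ N" unfolding \<eta>_def c_def
    proof (rule power_mono)
      show "a / L_const N \<le> a / K" using KL Kpos apos by (intro divide_left_mono) auto
    qed (use apos Lpos in simp)
    also have "\<dots> \<le> c ^ card {s\<in>C. (s, y) \<notin> h\<^sup>*}"
      by (rule power_decreasing[OF bad]) (use c0 c1 in auto)
    finally have "\<eta> * M \<le> c ^ card {s\<in>C. (s, y) \<notin> h\<^sup>*} * M" using Mpos by simp
    then show ?thesis using E h by (intro bexI[OF _ E(1)]) auto
  qed
  then obtain E where E: "E \<in> cgraphs C" "\<eta> * M \<le> graph_weight q E" "\<forall>s\<in>C. (s, y) \<in> E\<^sup>*" by blast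
  show "\<exists>E\<in>cgraphs (S1 - {y}).
           eta_maximal q (S1 - {y}) ((a / L_const (card (UNIV::'a set))) ^ card (UNIV::'a set)) E \<and>
           (\<forall>s\<in>S1 - {y}. leads_to E (S1 - {y}) s y)"
  proof (rule bexI[of _ E])
    show "E \<in> cgraphs (S1 - {y})" using E(1) unfolding C_def .
    show "eta_maximal q (S1 - {y}) ((a / L_const (card (UNIV::'a set))) ^ card (UNIV::'a set)) E \<and>
           (\<forall>s\<in>S1 - {y}. leads_to E (S1 - {y}) s y)"
      using E yC unfolding eta_maximal_def leads_to_def \<eta>_def N_def M_def C_def by auto
  qed
qed

end
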